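(* Let $n\ge8$, $m\in\mathbb N$, $p\in(0,1)$, and let $\mathcal I=\{11,12,21,22\}$. For $i=1,2,3$, $$\|\bar g_{l_{i,1}}\ast_{l_{i,3}}^{l_{i,2}}\bar g_{l_{i,4}}\|_2^2=\sum_{I\subseteq\mathcal I}(-1)^{|I|}\pi(H_{i,I}),$$ where $(l_{1,1},l_{1,2},l_{1,3},l_{1,4})=(1,0,1,1)$, $(l_{2,1},l_{2,2},l_{2,3},l_{2,4})=(2,1,1,2)$, $(l_{3,1},l_{3,2},l_{3,3},l_{3,4})=(2,1,1,1)$; that is, $\|\bar g_1\ast_1^0\bar g_1\|_2^2$, $\|\bar g_2\ast_1^1\bar g_2\|_2^2$ and $\|\bar g_2\ast_1^1\bar g_1\|_2^2$ equal the corresponding sums for $i=1,2,3$ respectively.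
   Context: Random intersection graph $\mathcal G(n,m,p)$: vertices $v_1,\ldots,v_n$, attributes $a_1,\ldots,a_m$; each vertex chooses each attribute independently with probability $p$; two vertices are adjacent iff they chose a common attribute; $\hat p=1-(1-p^2)^m$. For a graph $H$ with vertices among $v_1,\ldots,v_n$, $\pi(H)=\mathbb P(H\subseteq\mathcal G(n,m,p))$ (depends only on the isomorphism type of $H$); $\pi$ of the graph with no vertices is $1$. $\mu_{m,p}(x)=p^{|x|}(1-p)^{m-|x|}$ on $\{0,1\}^m$; $g(x,y)=1$ if $x_i=y_i=1$ for some $i$, else $0$; $g_1(x)=\int g(x,y)\,d\mu_{m,p}(y)$; $\bar g_2=g-\hat p$, $\bar g_1=g_1-\hat p$; norms are $L^2$ with respect to products of $\mu_{m,p}$; contraction $f\ast_b^ah(x_1,..,x_{b-a},y_1,..,y_{k-b},z_1,..,z_{l-b})=\int f(w,x,y)h(w,x,z)\,d\mu_{m,p}^{\otimes a}(w)$ for $f$ on $(\{0,1\}^m)^k$, $h$ on $(\{0,1\}^m)^l$. Graphs with edges labelled by $\mathcal I$: $G_1$ is the star $K_{1,4}$ with centre $v$ and leaves $u_{11},u_{12},u_{21},u_{22}$, edges $e_{ab}=\{v,u_{ab}\}$; $G_2$ is the $4$-cycle on $x_1,x_2,y_1,y_2$ with edges $e_{ab}=\{x_a,y_b\}$; $G_3$ is the path on $z_{12},x_1,y,x_2,z_{22}$ with edges $e_{11}=\{x_1,y\}$, $e_{12}=\{x_1,z_{12}\}$, $e_{21}=\{x_2,y\}$, $e_{22}=\{x_2,z_{22}\}$.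 For $I\subseteq\mathcal I$, $G_{i,I}$ is the subgraph of $G_i$ induced by the edges $e_{ab}$, $ab\in I$. $H_{i,I}$ is a graph on $8$ vertices from $\{v_1,\ldots,v_n\}$ consisting of a copy of $G_{i,I}$, together with $4-|I|$ further pairwise vertex-disjoint edges (disjoint from $G_{i,I}$), and isolated vertices. *)

theory Defs
  imports Complex_Main "HOL-Library.FuncSet"
begin

text \<open>Points of {0,1}^m are represented as subsets x of {..<m} (the set of attributes
  i with x_i = 1).  Vertices v_1..v_n are 0..n-1, attributes a_1..a_m are 0..m-1.\<close>

definition cube :: "nat \<Rightarrow> nat set set" where
  "cube m = Pow {..<m}"

definition mu :: "nat \<Rightarrow> real \<Rightarrow> nat set \<Rightarrow> real" where
  "mu m p x = p ^ card x * (1 - p) ^ (m - card x)"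

definition phat :: "nat \<Rightarrow> real \<Rightarrow> real" where
  "phat m p = 1 - (1 - p ^ 2) ^ m"

definition gfun :: "nat set \<Rightarrow> nat set \<Rightarrow> real" where
  "gfun x y = (if x \<inter> y \<noteq> {} then 1 else 0)"

definition g1 :: "nat \<Rightarrow> real \<Rightarrow> nat set \<Rightarrow> real" where
  "g1 m p x = (\<Sum>y\<in>cube m. gfun x y * mu m p y)"

text \<open>Functions on (\{0,1\}^m)^k are functions on lists of points of length k.\<close>

definition points :: "nat \<Rightarrow> nat \<Rightarrow> nat set list set" where
  "points m k = {xs. length xs = k \<and> set xs \<subseteq> cube m}"

definition mu_prod :: "nat \<Rightarrow> real \<Rightarrow> nat set list \<Rightarrow> real" where
  "mu_prod m p xs = prod_list (map (mu m p) xs)"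

definition gbar :: "nat \<Rightarrow> real \<Rightarrow> nat \<Rightarrow> nat set list \<Rightarrow> real" where
  "gbar m p j xs = (if j = 1 then g1 m p (xs ! 0) - phat m p
                    else gfun (xs ! 0) (xs ! 1) - phat m p)"

text \<open>Contraction f *_b^a h for f of arity k (and h of arity l):
  the argument list is (x_1..x_{b-a}, y_1..y_{k-b}, z_1..z_{l-b}) and
  the value is the integral over w in (\{0,1\}^m)^a of f(w,x,y) h(w,x,z).\<close>

definition contr :: "nat \<Rightarrow> real \<Rightarrow> (nat set list \<Rightarrow> real) \<Rightarrow> nat \<Rightarrow>
    (nat set list \<Rightarrow> real) \<Rightarrow> nat \<Rightarrow> nat \<Rightarrow> nat set list \<Rightarrow> real" where
  "contr m p f k h a b args =
     (let xs = take (b - a) args;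
          ys = take (k - b) (drop (b - a) args);
          zs = drop ((b - a) + (k - b)) args
      in (\<Sum>ws\<in>points m a. mu_prod m p ws * f (ws @ xs @ ys) * h (ws @ xs @ zs)))"

definition norm2sq :: "nat \<Rightarrow> real \<Rightarrow> nat \<Rightarrow> (nat set list \<Rightarrow> real) \<Rightarrow> real" where
  "norm2sq m p r f = (\<Sum>xs\<in>points m r. mu_prod m p xs * (f xs) ^ 2)"

text \<open>pi(E): probability that every edge of E is an edge of G(n,m,p).  A configuration
  S assigns to each vertex v < n its attribute set; its probability is the product of
  mu(S v); u,v (u \<noteq> v) are adjacent iff S u \<inter> S v \<noteq> {}.\<close>

definition piH :: "nat \<Rightarrow> nat \<Rightarrow> real \<Rightarrow> nat set set \<Rightarrow> real" where
  "piH n m p E = (\<Sum>S\<in>PiE {..<n} (\<lambda>_. cube m).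
      (if (\<forall>u v. {u, v} \<in> E \<longrightarrow> u \<noteq> v \<longrightarrow> S u \<inter> S v \<noteq> {}) then 1 else 0)
      * (\<Prod>v<n. mu m p (S v)))"

text \<open>Edge labels 11,12,21,22 are the pairs (a,b).\<close>

definition Ilab :: "(nat \<times> nat) set" where
  "Ilab = {(1,1), (1,2), (2,1), (2,2)}"

text \<open>Abstract vertices of G_1: v=0, u11=1, u12=2, u21=3, u22=4.
  G_2: x1=0, x2=1, y1=2, y2=3.  G_3: z12=0, x1=1, y=2, x2=3, z22=4.\<close>

definition Gedge :: "nat \<Rightarrow> nat \<times> nat \<Rightarrow> nat set" where
  "Gedge i ab = (let (a, b) = ab in
     if i = 1 then {0, 2 * a + b - 2}
     else if i = 2 then {a - 1, b + 1}
     else (if ab = (1,1) then {1, 2} else if ab = (1,2) then {1, 0}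
           else if ab = (2,1) then {3, 2} else {3, 4}))"

definition GI_edges :: "nat \<Rightarrow> (nat \<times> nat) set \<Rightarrow> nat set set" where
  "GI_edges i I = Gedge i ` I"

definition GI_verts :: "nat \<Rightarrow> (nat \<times> nat) set \<Rightarrow> nat set" where
  "GI_verts i I = \<Union> (GI_edges i I)"

definition is_H :: "nat \<Rightarrow> nat \<Rightarrow> (nat \<times> nat) set \<Rightarrow> nat set \<times> nat set set \<Rightarrow> bool" where
  "is_H n i I H = (let V = fst H; E = snd H in
     V \<subseteq> {..<n} \<and> card V = 8 \<and>
     (\<exists>\<phi> M. inj_on \<phi> (GI_verts i I) \<and> \<phi> ` GI_verts i I \<subseteq> V \<and>
        (\<forall>e\<in>M. card e = 2 \<and> e \<subseteq> V) \<and> finite M \<and> card M = 4 - card I \<and>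
        (\<forall>e\<in>M. \<forall>e'\<in>M. e \<noteq> e' \<longrightarrow> e \<inter> e' = {}) \<and>
        \<Union> M \<inter> \<phi> ` GI_verts i I = {} \<and>
        E = (\<lambda>e. \<phi> ` e) ` GI_edges i I \<union> M))"

definition lpar :: "nat \<Rightarrow> nat \<times> nat \<times> nat \<times> nat" where
  "lpar i = (if i = 1 then (1,0,1,1) else if i = 2 then (2,1,1,2) else (2,1,1,1))"

end

theory Submission
  imports Defs
begin


lemma finite_cube[simp]: "finite (cube m)" by (simp add: cube_def)

lemma sum_cube_Suc:
  "(\<Sum>x\<in>cube (Suc m). f x) = (\<Sum>x\<in>cube m. f x) + (\<Sum>x\<in>cube m. f (insert m x))"
proof -
  have e: "cube (Suc m) = cube m \<union> insert m ` cube m"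
    by (simp add: cube_def lessThan_Suc Pow_insert)
  have d: "cube m \<inter> insert m ` cube m = {}" by (auto simp: cube_def)
  have i: "inj_on (insert m) (cube m)"
    by (auto simp: cube_def inj_on_def)
  show ?thesis unfolding e
    by (subst sum.union_disjoint) (auto simp: d sum.reindex[OF i])
qed

lemma mu_Suc1: "x \<in> cube m \<Longrightarrow> mu (Suc m) p x = (1 - p) * mu m p x"
proof -
  assume x: "x \<in> cube m"
  then have "card x \<le> m" by (simp add: cube_def) (metis card_lessThan card_mono finite_lessThan)
  then have "Suc m - card x = Suc (m - card x)" by simp
  then show ?thesis by (simp add: mu_def)
qed

lemma mu_Suc2: "x \<in> cube m \<Longrightarrow> mu (Suc m) p (insert m x) = p * mu m p x"
proof -
  assume x: "x \<in> cube m"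
  then have f: "finite x" "m \<notin> x" by (auto simp: cube_def finite_subset)
  have "card x \<le> m" using x by (simp add: cube_def) (metis card_lessThan card_mono finite_lessThan)
  then show ?thesis using f by (simp add: mu_def)
qed

lemma sum_mu: "(\<Sum>x\<in>cube m. mu m p x) = 1"
proof (induction m)
  case 0 then show ?case by (simp add: cube_def mu_def)
next
  case (Suc m)
  have "(\<Sum>x\<in>cube (Suc m). mu (Suc m) p x) = (1 - p) * (\<Sum>x\<in>cube m. mu m p x) + p * (\<Sum>x\<in>cube m. mu m p x)"
    by (simp add: sum_cube_Suc mu_Suc1 mu_Suc2 sum_distrib_left)
  then show ?case using Suc by simp
qed

lemma sum_disj: "(\<Sum>x\<in>cube m. \<Sum>y\<in>cube m. mu m p x * mu m p y * (if x \<inter> y = {} then 1 else 0)) = (1 - p^2)^m"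
proof (induction m)
  case 0 then show ?case by (simp add: cube_def mu_def)
next
  case (Suc m)
  let ?D = "(\<Sum>x\<in>cube m. \<Sum>y\<in>cube m. mu m p x * mu m p y * (if x \<inter> y = {} then 1 else 0))"
  have c: "x \<in> cube m \<Longrightarrow> m \<notin> x" for x by (auto simp: cube_def)
  have "(\<Sum>x\<in>cube (Suc m). \<Sum>y\<in>cube (Suc m). mu (Suc m) p x * mu (Suc m) p y * (if x \<inter> y = {} then 1 else 0))
     = (1-p)*(1-p) * ?D + (1-p)*p * ?D + p*(1-p)*?D"
    apply (simp add: sum_cube_Suc mu_Suc1 mu_Suc2 sum.distrib sum_distrib_left c)
    apply (simp add: ac_simps)
    done
  also have "\<dots> = (1 - p^2) * ?D" by (simp add: algebra_simps power2_eq_square)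
  finally show ?case using Suc by simp
qed

lemma sum_edge: "(\<Sum>x\<in>cube m. \<Sum>y\<in>cube m. mu m p x * mu m p y * gfun x y) = phat m p"
proof -
  have "(\<Sum>x\<in>cube m. \<Sum>y\<in>cube m. mu m p x * mu m p y * gfun x y)
      = (\<Sum>x\<in>cube m. \<Sum>y\<in>cube m. mu m p x * mu m p y - mu m p x * mu m p y * (if x \<inter> y = {} then 1 else 0))"
    by (rule sum.cong, simp, rule sum.cong, auto simp: gfun_def)
  also have "\<dots> = 1 - (1 - p^2)^m"
    by (simp add: sum_subtractf sum_disj[symmetric] sum_distrib_left[symmetric] sum_distrib_right[symmetric] sum_mu)
  finally show ?thesis by (simp add: phat_def)
qed


definition ex :: "nat \<Rightarrow> real \<Rightarrow> nat set \<Rightarrow> ((nat \<Rightarrow> nat set) \<Rightarrow> real) \<Rightarrow> real" where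
  "ex m p A F = (\<Sum>S\<in>PiE A (\<lambda>_. cube m). (\<Prod>v\<in>A. mu m p (S v)) * F S)"

definition dep :: "nat set \<Rightarrow> ((nat \<Rightarrow> nat set) \<Rightarrow> real) \<Rightarrow> bool" where
  "dep B F = (\<forall>S S'. (\<forall>v\<in>B. S v = S' v) \<longrightarrow> F S = F S')"

lemma ex_empty[simp]: "ex m p {} F = F (\<lambda>_. undefined)"
  by (simp add: ex_def)

lemma ex_insert:
  assumes "finite A" "a \<notin> A"
  shows "ex m p (insert a A) F = (\<Sum>x\<in>cube m. mu m p x * ex m p A (\<lambda>S. F (S(a:=x))))"
proof -
  have "ex m p (insert a A) F =
     (\<Sum>(x,S)\<in>cube m \<times> PiE A (\<lambda>_. cube m). (\<Prod>v\<in>insert a A. mu m p ((S(a:=x)) v)) * F (S(a:=x)))"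
    unfolding ex_def PiE_insert_eq
    by (subst sum.reindex[OF inj_combinator[OF assms(2)]]) (simp add: case_prod_unfold)
  also have "\<dots> = (\<Sum>(x,S)\<in>cube m \<times> PiE A (\<lambda>_. cube m). mu m p x * ((\<Prod>v\<in>A. mu m p (S v)) * F (S(a:=x))))"
  proof (rule sum.cong, simp, clarify)
    fix x S
    have "(\<Prod>v\<in>A. mu m p ((S(a:=x)) v)) = (\<Prod>v\<in>A. mu m p (S v))"
      using assms(2) by (intro prod.cong) auto
    then show "(\<Prod>v\<in>insert a A. mu m p ((S(a:=x)) v)) * F (S(a:=x)) = mu m p x * ((\<Prod>v\<in>A. mu m p (S v)) * F (S(a:=x)))"
      using assms by simp
  qed
  also have "\<dots> = (\<Sum>x\<in>cube m. mu m p x * ex m p A (\<lambda>S. F (S(a:=x))))"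
    by (simp add: sum.cartesian_product[symmetric] ex_def sum_distrib_left)
  finally show ?thesis .
qed

lemma ex_cong: "(\<And>S. F S = G S) \<Longrightarrow> ex m p A F = ex m p A G"
  by (metis ext)

lemma ex_cmult: "ex m p A (\<lambda>S. c * F S) = c * ex m p A F"
  by (simp add: ex_def sum_distrib_left ac_simps)

lemma ex_sum: "ex m p A (\<lambda>S. \<Sum>I\<in>X. F I S) = (\<Sum>I\<in>X. ex m p A (F I))"
  by (simp add: ex_def sum_distrib_left sum.swap[of _ X])

lemma dep_mono: "dep B F \<Longrightarrow> B \<subseteq> C \<Longrightarrow> dep C F"
  unfolding dep_def by blast

lemma ex_indep_aux:
  assumes "finite C" "finite B" "dep B F" "B \<inter> C = {}"
  shows "ex m p (B \<union> C) F = ex m p B F"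
  using assms
proof (induction C rule: finite_induct)
  case empty then show ?case by simp
next
  case (insert c C)
  have "ex m p (B \<union> insert c C) F = ex m p (insert c (B \<union> C)) F" by simp
  also have "\<dots> = (\<Sum>x\<in>cube m. mu m p x * ex m p (B \<union> C) (\<lambda>S. F (S(c:=x))))"
    using insert by (intro ex_insert) auto
  also have "\<dots> = (\<Sum>x\<in>cube m. mu m p x * ex m p (B \<union> C) F)"
  proof -
    have "F (S(c:=x)) = F S" for S x using insert(5,6) unfolding dep_def
      by (metis disjoint_iff fun_upd_other insertCI)
    then show ?thesis by simp
  qed
  also have "\<dots> = ex m p B F" using insert by (simp add: sum_distrib_right[symmetric] sum_mu)
  finally show ?case .
qed

lemma ex_indep:
  assumes "finite A" "B \<subseteq> A" "dep B F"
  shows "ex m p A F = ex m p B F"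
proof -
  have "A = B \<union> (A - B)" using assms by auto
  then show ?thesis using ex_indep_aux[of "A - B" B F m p] assms
    by (metis Diff_disjoint finite_Diff finite_subset)
qed

lemma ex_mult:
  assumes "finite C" "finite B" "dep B F" "B \<inter> C = {}"
  shows "dep C G \<Longrightarrow> ex m p (B \<union> C) (\<lambda>S. F S * G S) = ex m p B F * ex m p C G"
  using assms
proof (induction C arbitrary: G rule: finite_induct)
  case empty
  then have "G S = G (\<lambda>_. undefined)" for S by (simp add: dep_def)
  then have "ex m p B (\<lambda>S. F S * G S) = ex m p B (\<lambda>S. G (\<lambda>_. undefined) * F S)"
    by (intro ex_cong) simp
  then show ?case by (simp add: ex_cmult)
next
  case (insert c C)
  have cB: "c \<notin> B" using insert by auto
  have "ex m p (B \<union> insert c C) (\<lambda>S. F S * G S) = ex m p (insert c (B \<union> C)) (\<lambda>S. F S * G S)" by simp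
  also have "\<dots> = (\<Sum>x\<in>cube m. mu m p x * ex m p (B \<union> C) (\<lambda>S. F (S(c:=x)) * G (S(c:=x))))"
    using insert cB by (intro ex_insert) auto
  also have "\<dots> = (\<Sum>x\<in>cube m. mu m p x * (ex m p B F * ex m p C (\<lambda>S. G (S(c:=x)))))"
  proof (rule sum.cong, simp)
    fix x
    have "F (S(c:=x)) = F S" for S using insert(6) cB unfolding dep_def
      by (metis fun_upd_other)
    moreover have "dep C (\<lambda>S. G (S(c:=x)))" using insert(4) unfolding dep_def
      by (metis fun_upd_apply insert_iff)
    ultimately show "mu m p x * ex m p (B \<union> C) (\<lambda>S. F (S(c:=x)) * G (S(c:=x))) = mu m p x * (ex m p B F * ex m p C (\<lambda>S. G (S(c:=x))))"
      using insert by simp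
  qed
  also have "\<dots> = ex m p B F * ex m p (insert c C) G"
    using insert by (simp add: ex_insert sum_distrib_left ac_simps)
  finally show ?case .
qed

lemma ex_reindex:
  assumes "finite V"
  shows "inj_on \<phi> V \<Longrightarrow> dep V G \<Longrightarrow> ex m p (\<phi> ` V) (\<lambda>S. G (\<lambda>v. S (\<phi> v))) = ex m p V G"
  using assms
proof (induction V arbitrary: G rule: finite_induct)
  case empty then show ?case by simp
next
  case (insert a V)
  have na: "\<phi> a \<notin> \<phi> ` V" using insert by auto
  have "ex m p (\<phi> ` insert a V) (\<lambda>S. G (\<lambda>v. S (\<phi> v))) = 
     (\<Sum>x\<in>cube m. mu m p x * ex m p (\<phi> ` V) (\<lambda>S. G (\<lambda>v. (S(\<phi> a:=x)) (\<phi> v))))"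
    using insert na by (simp add: ex_insert)
  also have "\<dots> = (\<Sum>x\<in>cube m. mu m p x * ex m p V (\<lambda>T. G (T(a:=x))))"
  proof (rule sum.cong, simp)
    fix x
    have "G (\<lambda>v. (S(\<phi> a:=x)) (\<phi> v)) = G ((\<lambda>v. S (\<phi> v))(a:=x))" for S
      using insert(4,5) unfolding dep_def inj_on_def
      by (smt (verit, best) fun_upd_apply insert_iff)
    moreover have "dep V (\<lambda>T. G (T(a:=x)))" using insert(5) unfolding dep_def
      by (metis fun_upd_apply insert_iff)
    moreover have "inj_on \<phi> V" using insert by auto
    ultimately show "mu m p x * ex m p (\<phi> ` V) (\<lambda>S. G (\<lambda>v. (S(\<phi> a:=x)) (\<phi> v))) = mu m p x * ex m p V (\<lambda>T. G (T(a:=x)))"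
      using insert(3)[of "\<lambda>T. G (T(a:=x))"] by simp
  qed
  also have "\<dots> = ex m p (insert a V) G" using insert by (simp add: ex_insert)
  finally show ?case .
qed




definition eok :: "(nat \<Rightarrow> nat set) \<Rightarrow> nat set \<Rightarrow> bool" where
  "eok S e = (\<exists>u v. e = {u, v} \<and> u \<noteq> v \<and> S u \<inter> S v \<noteq> {})"

definition eind :: "(nat \<Rightarrow> nat set) \<Rightarrow> nat set \<Rightarrow> real" where
  "eind S e = (if eok S e then 1 else 0)"

lemma eind_pair: "u \<noteq> v \<Longrightarrow> eind S {u, v} = gfun (S u) (S v)"
  unfolding eind_def eok_def gfun_def
  by (auto simp: doubleton_eq_iff Int_commute)

lemma dep_eind: "dep e (\<lambda>S. eind S e)"
proof -
  have "eok S e = eok S' e" if "\<forall>v\<in>e. S v = S' v" for S S'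
    using that unfolding eok_def by (metis insertCI)
  then show ?thesis unfolding dep_def eind_def by metis
qed

lemma dep_prod: "(\<And>x. x \<in> X \<Longrightarrow> dep B (F x)) \<Longrightarrow> dep B (\<lambda>S. \<Prod>x\<in>X. F x S)"
  unfolding dep_def by (metis (mono_tags, lifting) prod.cong)

lemma ex_edge: "u \<noteq> v \<Longrightarrow> ex m p {u, v} (\<lambda>S. eind S {u, v}) = phat m p"
proof -
  assume uv: "u \<noteq> v"
  have "ex m p {u, v} (\<lambda>S. eind S {u, v}) = ex m p (insert u {v}) (\<lambda>S. gfun (S u) (S v))"
    using uv by (simp add: eind_pair)
  also have "\<dots> = (\<Sum>x\<in>cube m. mu m p x * ex m p {v} (\<lambda>S. gfun x (S v)))"
    using uv by (subst ex_insert) auto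
  also have "\<dots> = (\<Sum>x\<in>cube m. mu m p x * (\<Sum>y\<in>cube m. mu m p y * gfun x y))"
    by (subst ex_insert) auto
  also have "\<dots> = phat m p"
    by (simp add: sum_edge[symmetric] sum_distrib_left mult.assoc)
  finally show ?thesis .
qed

lemma ex_M:
  assumes "finite M"
  shows "(\<forall>e\<in>M. card e = 2) \<Longrightarrow> (\<forall>e\<in>M. \<forall>e'\<in>M. e \<noteq> e' \<longrightarrow> e \<inter> e' = {}) \<Longrightarrow>
    ex m p (\<Union>M) (\<lambda>S. \<Prod>e\<in>M. eind S e) = phat m p ^ card M"
  using assms
proof (induction M rule: finite_induct)
  case empty then show ?case by simp
next
  case (insert e M)
  have "card e = 2" using insert(4) by simp
  then obtain u v where e: "e = {u,v}" "u \<noteq> v" unfolding card_2_iff by blast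
  have "finite e'" if "e' \<in> M" for e' using insert(4) that
    by (metis card.infinite insert_iff zero_neq_numeral)
  then have fin: "finite (\<Union>M)" using insert(1) by blast
  have disj: "e \<inter> \<Union>M = {}"
  proof -
    have "e \<inter> e' = {}" if "e' \<in> M" for e' using insert(5) that insert(2) by (metis insertCI)
    then show ?thesis by blast
  qed
  have "ex m p (\<Union>(insert e M)) (\<lambda>S. \<Prod>e\<in>insert e M. eind S e)
      = ex m p (e \<union> \<Union>M) (\<lambda>S. eind S e * (\<Prod>e\<in>M. eind S e))"
    using insert by simp
  also have "\<dots> = ex m p e (\<lambda>S. eind S e) * ex m p (\<Union>M) (\<lambda>S. \<Prod>e\<in>M. eind S e)"
  proof (rule ex_mult)
    show "finite (\<Union>M)" by (rule fin)
    show "finite e" using e by simp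
    show "dep e (\<lambda>S. eind S e)" by (rule dep_eind)
    show "e \<inter> \<Union>M = {}" by (rule disj)
    show "dep (\<Union>M) (\<lambda>S. \<Prod>e\<in>M. eind S e)"
      by (rule dep_prod, rule dep_mono[OF dep_eind]) blast
  qed
  also have "\<dots> = phat m p * phat m p ^ card M"
    using insert e by (simp add: ex_edge)
  finally show ?case using insert by simp
qed

lemma piH_ex:
  assumes "finite E" "\<forall>e\<in>E. card e = 2"
  shows "piH n m p E = ex m p {..<n} (\<lambda>S. \<Prod>e\<in>E. eind S e)"
proof -
  have "(if (\<forall>u v. {u, v} \<in> E \<longrightarrow> u \<noteq> v \<longrightarrow> S u \<inter> S v \<noteq> {}) then 1 else 0) = (\<Prod>e\<in>E. eind S e)"
    for S :: "nat \<Rightarrow> nat set"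
  proof -
    have iff: "(\<forall>u v. {u, v} \<in> E \<longrightarrow> u \<noteq> v \<longrightarrow> S u \<inter> S v \<noteq> {}) \<longleftrightarrow> (\<forall>e\<in>E. eok S e)"
    proof
      assume h: "\<forall>u v. {u, v} \<in> E \<longrightarrow> u \<noteq> v \<longrightarrow> S u \<inter> S v \<noteq> {}"
      show "\<forall>e\<in>E. eok S e"
      proof
        fix e assume "e \<in> E"
        have "card e = 2" using assms(2) \<open>e \<in> E\<close> by blast
        then obtain u v where uv: "e = {u,v}" "u \<noteq> v" unfolding card_2_iff by blast
        then have "{u,v} \<in> E" using \<open>e \<in> E\<close> by simp
        then have "S u \<inter> S v \<noteq> {}" using h uv(2) by simp
        then show "eok S e" unfolding eok_def using uv by blast
      qed
    next
      assume h: "\<forall>e\<in>E. eok S e"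
      show "\<forall>u v. {u, v} \<in> E \<longrightarrow> u \<noteq> v \<longrightarrow> S u \<inter> S v \<noteq> {}"
      proof (intro allI impI)
        fix u v assume "{u, v} \<in> E" "u \<noteq> v"
        then have "eok S {u,v}" using h by blast
        then obtain u' v' where uv: "{u,v} = {u',v'}" "S u' \<inter> S v' \<noteq> {}" unfolding eok_def by blast
        from uv(1) have "(u = u' \<and> v = v') \<or> (u = v' \<and> v = u')" by (simp add: doubleton_eq_iff)
        then show "S u \<inter> S v \<noteq> {}" using uv(2) by (metis Int_commute)
      qed
    qed
    have "(\<Prod>e\<in>E. eind S e) = (if \<forall>e\<in>E. eok S e then 1 else 0)"
      using assms(1) unfolding eind_def
      by (induction E rule: finite_induct) simp_all
    then show ?thesis using iff by simp
  qed
  then show ?thesis unfolding piH_def ex_def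
    by (intro sum.cong refl) (simp add: mult.commute)
qed


lemma Ilab_finite[simp]: "finite Ilab" by (simp add: Ilab_def)
lemma card_Ilab: "card Ilab = 4" by (simp add: Ilab_def)

lemma Gedge_card: "i \<in> {1,2,3} \<Longrightarrow> ab \<in> Ilab \<Longrightarrow> card (Gedge i ab) = 2"
  unfolding Ilab_def by (elim insertE emptyE; simp add: Gedge_def)

lemma Gedge_pair: "i \<in> {1,2,3} \<Longrightarrow> ab \<in> Ilab \<Longrightarrow> \<exists>u v. Gedge i ab = {u, v} \<and> u \<noteq> v"
  using Gedge_card unfolding card_2_iff by blast

lemma Gedge_inj1: "inj_on (Gedge 1) Ilab"
  by (simp add: Ilab_def Gedge_def doubleton_eq_iff)
lemma Gedge_inj2: "inj_on (Gedge 2) Ilab"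
  by (simp add: Ilab_def Gedge_def doubleton_eq_iff)
lemma Gedge_inj3: "inj_on (Gedge 3) Ilab"
  by (simp add: Ilab_def Gedge_def doubleton_eq_iff)
lemma Gedge_inj: "i \<in> {1,2,3} \<Longrightarrow> inj_on (Gedge i) Ilab"
  using Gedge_inj1 Gedge_inj2 Gedge_inj3 by blast

lemma Gedge_finite[simp]: "finite (Gedge i ab)"
  by (cases ab) (simp add: Gedge_def)

lemma GI_verts_finite: "i \<in> {1,2,3} \<Longrightarrow> I \<subseteq> Ilab \<Longrightarrow> finite (GI_verts i I)"
  unfolding GI_verts_def GI_edges_def
  by (rule finite_Union) (auto intro!: finite_imageI intro: finite_subset[OF _ Ilab_finite])

lemma dep_mult: "dep B F \<Longrightarrow> dep B G \<Longrightarrow> dep B (\<lambda>S. F S * G S)"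
  unfolding dep_def by metis

lemma piH_H:
  assumes i: "i \<in> {1,2,3}" and I: "I \<subseteq> Ilab" and H: "is_H n i I HH"
  shows "piH n m p (snd HH) = phat m p ^ (4 - card I) *
           ex m p (GI_verts i Ilab) (\<lambda>S. \<Prod>ab\<in>I. eind S (Gedge i ab))"
proof -
  define GV where "GV = GI_verts i I"
  have Hx: "\<exists>\<phi> M. inj_on \<phi> GV \<and> \<phi> ` GV \<subseteq> fst HH \<and>
        (\<forall>e\<in>M. card e = 2 \<and> e \<subseteq> fst HH) \<and> finite M \<and> card M = 4 - card I \<and>
        (\<forall>e\<in>M. \<forall>e'\<in>M. e \<noteq> e' \<longrightarrow> e \<inter> e' = {}) \<and>
        \<Union> M \<inter> \<phi> ` GV = {} \<and>
        snd HH = (\<lambda>e. \<phi> ` e) ` GI_edges i I \<union> M"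
    using H unfolding is_H_def GV_def Let_def by (elim conjE)
  then obtain \<phi> M where A: "inj_on \<phi> GV \<and> \<phi> ` GV \<subseteq> fst HH \<and>
        (\<forall>e\<in>M. card e = 2 \<and> e \<subseteq> fst HH) \<and> finite M \<and> card M = 4 - card I \<and>
        (\<forall>e\<in>M. \<forall>e'\<in>M. e \<noteq> e' \<longrightarrow> e \<inter> e' = {}) \<and>
        \<Union> M \<inter> \<phi> ` GV = {} \<and>
        snd HH = (\<lambda>e. \<phi> ` e) ` GI_edges i I \<union> M" by (elim exE)
  note inj = A[THEN conjunct1]
  note phiV = A[THEN conjunct2, THEN conjunct1]
  note Mc = A[THEN conjunct2, THEN conjunct2, THEN conjunct1]
  note finM = A[THEN conjunct2, THEN conjunct2, THEN conjunct2, THEN conjunct1]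
  note cardM = A[THEN conjunct2, THEN conjunct2, THEN conjunct2, THEN conjunct2, THEN conjunct1]
  note Mdisj = A[THEN conjunct2, THEN conjunct2, THEN conjunct2, THEN conjunct2, THEN conjunct2, THEN conjunct1]
  note MGV = A[THEN conjunct2, THEN conjunct2, THEN conjunct2, THEN conjunct2, THEN conjunct2, THEN conjunct2, THEN conjunct1]
  note E = A[THEN conjunct2, THEN conjunct2, THEN conjunct2, THEN conjunct2, THEN conjunct2, THEN conjunct2, THEN conjunct2]
  have V: "fst HH \<subseteq> {..<n}" using H unfolding is_H_def Let_def by (rule conjunct1)
  have finI: "finite I" using finite_subset[OF I Ilab_finite] .
  have GVfin: "finite GV" unfolding GV_def using GI_verts_finite[OF i I] .
  have GVsub: "Gedge i ab \<subseteq> GV" if "ab \<in> I" for ab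
    using that unfolding GV_def GI_verts_def GI_edges_def by blast
  have "finite e" if eM: "e \<in> M" for e
  proof -
    have "card e = 2" using Mc eM by blast
    then show ?thesis by (cases "finite e") simp_all
  qed
  then have Mfin: "finite (\<Union>M)" using finM by blast
  define E1 where "E1 = (\<lambda>e. \<phi> ` e) ` GI_edges i I"
  have E1eq: "E1 = (\<lambda>ab. \<phi> ` Gedge i ab) ` I" unfolding E1_def GI_edges_def by (simp add: image_image)
  have injE: "inj_on (\<lambda>ab. \<phi> ` Gedge i ab) I"
  proof (rule inj_onI)
    fix a b assume a: "a \<in> I" and b: "b \<in> I" and eq: "\<phi> ` Gedge i a = \<phi> ` Gedge i b"
    have "Gedge i a \<in> Pow GV" "Gedge i b \<in> Pow GV" using GVsub a b by auto
    then have "Gedge i a = Gedge i b" using inj_onD[OF inj_on_image_Pow[OF inj] eq] by blast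
    moreover have "a \<in> Ilab" "b \<in> Ilab" using a b I by auto
    ultimately show "a = b" using inj_onD[OF Gedge_inj[OF i]] by blast
  qed
  have pairI: "\<exists>u v. Gedge i ab = {u, v} \<and> u \<noteq> v" if "ab \<in> I" for ab
    using Gedge_pair[OF i] I that by blast
  have E1card: "card e = 2" if eE1: "e \<in> E1" for e
  proof -
    obtain ab where ab: "ab \<in> I" "e = \<phi> ` Gedge i ab" using eE1 E1eq by blast
    obtain u v where uv: "Gedge i ab = {u, v}" "u \<noteq> v" using pairI[OF ab(1)] by blast
    have "u \<in> GV" "v \<in> GV" using GVsub[OF ab(1)] uv by auto
    then have "\<phi> u \<noteq> \<phi> v" using inj uv(2) by (meson inj_on_contraD)
    then show ?thesis using ab uv by simp
  qed
  have E1M: "E1 \<inter> M = {}"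
  proof -
    have "e \<notin> M" if "e \<in> E1" for e
    proof
      assume "e \<in> M"
      have "e \<subseteq> \<phi> ` GV" using that E1eq GVsub by auto
      moreover have "e \<noteq> {}" using E1card[OF that] by auto
      ultimately show False using MGV \<open>e \<in> M\<close> by blast
    qed
    then show ?thesis by blast
  qed
  have finE1: "finite E1" using E1eq finI by simp
  have Ecard: "\<forall>e\<in>snd HH. card e = 2" using E E1card Mc unfolding E1_def by blast
  have "piH n m p (snd HH) = ex m p {..<n} (\<lambda>S. \<Prod>e\<in>E1 \<union> M. eind S e)"
    using piH_ex[of "snd HH" n m p] Ecard finE1 finM E unfolding E1_def by simp
  also have "\<dots> = ex m p {..<n} (\<lambda>S. (\<Prod>ab\<in>I. eind S (\<phi> ` Gedge i ab)) * (\<Prod>e\<in>M. eind S e))"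
  proof -
    have "(\<Prod>e\<in>E1 \<union> M. eind S e) = (\<Prod>e\<in>E1. eind S e) * (\<Prod>e\<in>M. eind S e)" for S
      by (rule prod.union_disjoint[OF finE1 finM E1M])
    moreover have "(\<Prod>e\<in>E1. eind S e) = (\<Prod>ab\<in>I. eind S (\<phi> ` Gedge i ab))" for S
      unfolding E1eq by (subst prod.reindex[OF injE]) simp
    ultimately show ?thesis by simp
  qed
  also have "\<dots> = ex m p (\<phi> ` GV \<union> \<Union>M) (\<lambda>S. (\<Prod>ab\<in>I. eind S (\<phi> ` Gedge i ab)) * (\<Prod>e\<in>M. eind S e))"
  proof (rule ex_indep)
    show "finite {..<n}" by simp
    show "\<phi> ` GV \<union> \<Union> M \<subseteq> {..<n}" using phiV Mc V by blast
    show "dep (\<phi> ` GV \<union> \<Union> M) (\<lambda>S. (\<Prod>ab\<in>I. eind S (\<phi> ` Gedge i ab)) * (\<Prod>e\<in>M. eind S e))"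
      by (intro dep_mult dep_prod; rule dep_mono[OF dep_eind]) (use GVsub in auto)
  qed
  also have "\<dots> = ex m p (\<phi> ` GV) (\<lambda>S. \<Prod>ab\<in>I. eind S (\<phi> ` Gedge i ab)) * ex m p (\<Union>M) (\<lambda>S. \<Prod>e\<in>M. eind S e)"
  proof (rule ex_mult)
    show "finite (\<Union>M)" by (rule Mfin)
    show "finite (\<phi> ` GV)" using GVfin by simp
    show "\<phi> ` GV \<inter> \<Union> M = {}" using MGV by blast
    show "dep (\<phi> ` GV) (\<lambda>S. \<Prod>ab\<in>I. eind S (\<phi> ` Gedge i ab))"
      by (intro dep_prod; rule dep_mono[OF dep_eind]) (use GVsub in auto)
    show "dep (\<Union> M) (\<lambda>S. \<Prod>e\<in>M. eind S e)"
      by (intro dep_prod; rule dep_mono[OF dep_eind]) auto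
  qed
  also have "ex m p (\<Union>M) (\<lambda>S. \<Prod>e\<in>M. eind S e) = phat m p ^ (4 - card I)"
    using ex_M[OF finM] Mc Mdisj cardM by simp
  also have "ex m p (\<phi> ` GV) (\<lambda>S. \<Prod>ab\<in>I. eind S (\<phi> ` Gedge i ab))
      = ex m p (\<phi> ` GV) (\<lambda>S. (\<lambda>T. \<Prod>ab\<in>I. eind T (Gedge i ab)) (\<lambda>v. S (\<phi> v)))"
  proof (rule ex_cong, rule prod.cong, simp)
    fix S ab assume ab: "ab \<in> I"
    obtain u v where uv: "Gedge i ab = {u, v}" "u \<noteq> v" using pairI[OF ab] by blast
    have "u \<in> GV" "v \<in> GV" using GVsub[OF ab] uv by auto
    then have "\<phi> u \<noteq> \<phi> v" using inj uv(2) by (meson inj_on_contraD)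
    then show "eind S (\<phi> ` Gedge i ab) = eind (\<lambda>v. S (\<phi> v)) (Gedge i ab)"
      using uv by (simp add: eind_pair)
  qed
  also have "\<dots> = ex m p GV (\<lambda>T. \<Prod>ab\<in>I. eind T (Gedge i ab))"
    by (rule ex_reindex[OF GVfin inj]) (intro dep_prod; rule dep_mono[OF dep_eind]; use GVsub in auto)
  also have "\<dots> = ex m p (GI_verts i Ilab) (\<lambda>T. \<Prod>ab\<in>I. eind T (Gedge i ab))"
  proof (rule ex_indep[symmetric])
    show "finite (GI_verts i Ilab)" using GI_verts_finite[OF i] by simp
    show "GV \<subseteq> GI_verts i Ilab" unfolding GV_def GI_verts_def GI_edges_def using I by blast
    show "dep GV (\<lambda>T. \<Prod>ab\<in>I. eind T (Gedge i ab))"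
      by (intro dep_prod; rule dep_mono[OF dep_eind]) (use GVsub in auto)
  qed
  finally show ?thesis by (simp add: mult.commute)
qed

lemma assemble:
  assumes i: "i \<in> {1,2,3}" and H: "\<forall>I. I \<subseteq> Ilab \<longrightarrow> is_H n i I (H I)"
  shows "ex m p (GI_verts i Ilab) (\<lambda>S. \<Prod>ab\<in>Ilab. eind S (Gedge i ab) - phat m p)
    = (\<Sum>I\<in>Pow Ilab. (-1) ^ card I * piH n m p (snd (H I)))"
proof -
  let ?F = "\<lambda>I S. \<Prod>ab\<in>I. eind S (Gedge i ab)"
  let ?V = "GI_verts i Ilab"
  have "ex m p ?V (\<lambda>S. \<Prod>ab\<in>Ilab. eind S (Gedge i ab) - phat m p)
     = ex m p ?V (\<lambda>S. \<Sum>I\<in>Pow Ilab. (-phat m p) ^ card (Ilab - I) * ?F I S)"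
  proof (rule ex_cong)
    fix S
    have "(\<Prod>ab\<in>Ilab. eind S (Gedge i ab) - phat m p) = (\<Prod>ab\<in>Ilab. eind S (Gedge i ab) + (- phat m p))"
      by simp
    also have "\<dots> = (\<Sum>I\<in>Pow Ilab. ?F I S * (\<Prod>ab\<in>Ilab - I. - phat m p))"
      by (rule prod_add) simp
    finally show "(\<Prod>ab\<in>Ilab. eind S (Gedge i ab) - phat m p) = (\<Sum>I\<in>Pow Ilab. (-phat m p) ^ card (Ilab - I) * ?F I S)"
      by (simp add: mult.commute)
  qed
  also have "\<dots> = (\<Sum>I\<in>Pow Ilab. (-phat m p) ^ card (Ilab - I) * ex m p ?V (?F I))"
    by (simp add: ex_sum ex_cmult)
  also have "\<dots> = (\<Sum>I\<in>Pow Ilab. (-1) ^ card I * piH n m p (snd (H I)))"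
  proof (rule sum.cong, simp)
    fix I assume "I \<in> Pow Ilab"
    then have I: "I \<subseteq> Ilab" by simp
    have c: "card (Ilab - I) = 4 - card I" using I card_Ilab by (simp add: card_Diff_subset finite_subset)
    have k: "card I \<le> 4" using I card_Ilab by (metis Ilab_finite card_mono)
    have s: "(-1::real) ^ (4 - card I) = (-1) ^ card I"
    proof -
      have "(-1::real) ^ (4 - card I) * (-1) ^ card I = 1" using k
        by (simp add: power_add[symmetric])
      then show ?thesis by (metis mult_minus1 power_minus1_even power_one_right one_neq_neg_one mult_cancel_right1 minus_one_power_iff)
    qed
    show "(-phat m p) ^ card (Ilab - I) * ex m p ?V (?F I) = (-1) ^ card I * piH n m p (snd (H I))"
      using piH_H[OF i I, of n "H I" m p] H I c s
      by (simp add: power_minus[of "phat m p"])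
  qed
  finally show ?thesis .
qed



lemma points0: "points m 0 = {[]}" by (auto simp: points_def)

lemma points1: "points m 1 = (\<lambda>x. [x]) ` cube m"
  by (auto simp: points_def length_Suc_conv)

lemma points2: "points m 2 = (\<lambda>(x,y). [x,y]) ` (cube m \<times> cube m)"
  by (auto simp: points_def length_Suc_conv numeral_2_eq_2)

lemma sum_points1: "(\<Sum>xs\<in>points m 1. f xs) = (\<Sum>x\<in>cube m. f [x])"
  unfolding points1 by (subst sum.reindex) (auto simp: inj_on_def)

lemma sum_points2: "(\<Sum>xs\<in>points m 2. f xs) = (\<Sum>x\<in>cube m. \<Sum>y\<in>cube m. f [x,y])"
  unfolding points2 by (subst sum.reindex) (auto simp: inj_on_def sum.cartesian_product case_prod_unfold)

lemma gbar1_sum: "gbar m p 1 [x] = (\<Sum>y\<in>cube m. mu m p y * (gfun x y - phat m p))"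
proof -
  have "phat m p = (\<Sum>y\<in>cube m. mu m p y * phat m p)"
    by (simp add: sum_distrib_right[symmetric] sum_mu)
  then show ?thesis
    by (simp add: gbar_def g1_def right_diff_distrib sum_subtractf mult.commute)
qed

lemma GV1: "GI_verts 1 Ilab = {0,1,2,3,4}"
  by (simp add: GI_verts_def GI_edges_def Ilab_def Gedge_def) (simp add: eval_nat_numeral insert_commute)
lemma GV2: "GI_verts 2 Ilab = {0,1,2,3}"
  by (simp add: GI_verts_def GI_edges_def Ilab_def Gedge_def) (simp add: eval_nat_numeral insert_commute)
lemma GV3: "GI_verts 3 Ilab = {0,1,2,3,4}"
  by (simp add: GI_verts_def GI_edges_def Ilab_def Gedge_def) (simp add: eval_nat_numeral insert_commute)

lemma L1: "(case lpar 1 of (l1, l2, l3, l4) \<Rightarrow>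
           norm2sq m p ((l3 - l2) + (l1 - l3) + (l4 - l3))
             (contr m p (gbar m p l1) l1 (gbar m p l4) l2 l3))
    = (\<Sum>x\<in>cube m. mu m p x * (\<Sum>y\<in>cube m. mu m p y * (gfun x y - phat m p)) ^ 4)"
proof -
  have c: "contr m p (gbar m p 1) 1 (gbar m p 1) 0 1 [x] = gbar m p 1 [x] * gbar m p 1 [x]" for x
    by (simp add: contr_def points0 mu_prod_def Let_def)
  have "(case lpar 1 of (l1, l2, l3, l4) \<Rightarrow>
           norm2sq m p ((l3 - l2) + (l1 - l3) + (l4 - l3))
             (contr m p (gbar m p l1) l1 (gbar m p l4) l2 l3))
       = norm2sq m p 1 (contr m p (gbar m p 1) 1 (gbar m p 1) 0 1)" by (simp add: lpar_def)
  also have "\<dots> = (\<Sum>x\<in>cube m. mu m p x * (contr m p (gbar m p 1) 1 (gbar m p 1) 0 1 [x])^2)"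
    unfolding norm2sq_def sum_points1 mu_prod_def by simp
  also have "\<dots> = (\<Sum>x\<in>cube m. mu m p x * (\<Sum>y\<in>cube m. mu m p y * (gfun x y - phat m p)) ^ 4)"
    unfolding c gbar1_sum by (simp add: power2_eq_square eval_nat_numeral mult.assoc)
  finally show ?thesis .
qed


lemma Gedge_vals:
  "Gedge 1 (1,1) = {0,1}" "Gedge 1 (1,2) = {0,2}" "Gedge 1 (2,1) = {0,3}" "Gedge 1 (2,2) = {0,4}"
  "Gedge 2 (1,1) = {0,2}" "Gedge 2 (1,2) = {0,3}" "Gedge 2 (2,1) = {1,2}" "Gedge 2 (2,2) = {1,3}"
  "Gedge 3 (1,1) = {1,2}" "Gedge 3 (1,2) = {1,0}" "Gedge 3 (2,1) = {3,2}" "Gedge 3 (2,2) = {3,4}"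
  by (simp_all add: Gedge_def eval_nat_numeral)

lemma dep_var: "b \<in> A \<Longrightarrow> dep A (\<lambda>S. f (S b))"
  unfolding dep_def by auto

lemma dep_var2: "a \<in> A \<Longrightarrow> b \<in> A \<Longrightarrow> dep A (\<lambda>S. f (S a) (S b))"
  unfolding dep_def by auto

lemma ex_factor:
  assumes "finite A" "a \<notin> A" "dep A G"
  shows "ex m p (insert a A) (\<lambda>S. f (S a) * G S) = (\<Sum>x\<in>cube m. mu m p x * f x) * ex m p A G"
proof -
  have "G (S(a:=x)) = G S" for S x using assms(2,3) unfolding dep_def by auto
  then show ?thesis using assms(1,2)
    by (simp add: ex_insert ex_cmult sum_distrib_right mult.assoc)
qed

lemma ex_single: "ex m p {a} (\<lambda>S. f (S a)) = (\<Sum>x\<in>cube m. mu m p x * f x)"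
  by (simp add: ex_insert)

lemma ex_two: "a \<noteq> b \<Longrightarrow> ex m p {a, b} (\<lambda>S. F (S a) (S b)) = (\<Sum>x\<in>cube m. mu m p x * (\<Sum>y\<in>cube m. mu m p y * F x y))"
  by (simp add: ex_insert)

lemma R1: "ex m p (GI_verts 1 Ilab) (\<lambda>S. \<Prod>ab\<in>Ilab. eind S (Gedge 1 ab) - phat m p)
   = (\<Sum>x\<in>cube m. mu m p x * (\<Sum>y\<in>cube m. mu m p y * (gfun x y - phat m p)) ^ 4)"
proof -
  let ?f = "\<lambda>x y. gfun x y - phat m p"
  let ?s = "\<lambda>x. \<Sum>y\<in>cube m. mu m p y * ?f x y"
  have P: "(\<Prod>ab\<in>Ilab. eind S (Gedge 1 ab) - phat m p) =
     ?f (S 0) (S 1) * (?f (S 0) (S 2) * (?f (S 0) (S 3) * ?f (S 0) (S 4)))" for S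
    by (simp add: Ilab_def Gedge_vals Gedge_vals[simplified] eind_pair)
  have "ex m p (GI_verts 1 Ilab) (\<lambda>S. \<Prod>ab\<in>Ilab. eind S (Gedge 1 ab) - phat m p)
      = ex m p (insert 0 {1,2,3,4}) (\<lambda>S. ?f (S 0) (S 1) * (?f (S 0) (S 2) * (?f (S 0) (S 3) * ?f (S 0) (S 4))))"
    unfolding GV1 P by simp
  also have "\<dots> = (\<Sum>x\<in>cube m. mu m p x * ex m p (insert 1 {2,3,4}) (\<lambda>S. ?f x (S 1) * (?f x (S 2) * (?f x (S 3) * ?f x (S 4)))))"
    by (subst ex_insert) auto
  also have "\<dots> = (\<Sum>x\<in>cube m. mu m p x * ?s x ^ 4)"
  proof (rule sum.cong[OF refl])
    fix x
    have "ex m p (insert 1 {2,3,4}) (\<lambda>S. ?f x (S 1) * (?f x (S 2) * (?f x (S 3) * ?f x (S 4))))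
        = ?s x * ex m p (insert 2 {3,4}) (\<lambda>S. ?f x (S 2) * (?f x (S 3) * ?f x (S 4)))"
      by (subst ex_factor[where f="?f x"]) (auto intro!: dep_mult dep_var)
    also have "ex m p (insert 2 {3,4}) (\<lambda>S. ?f x (S 2) * (?f x (S 3) * ?f x (S 4)))
        = ?s x * ex m p (insert 3 {4}) (\<lambda>S. ?f x (S 3) * ?f x (S 4))"
      by (subst ex_factor[where f="?f x"]) (auto intro!: dep_mult dep_var)
    also have "ex m p (insert 3 {4}) (\<lambda>S. ?f x (S 3) * ?f x (S 4)) = ?s x * ex m p {4} (\<lambda>S. ?f x (S 4))"
      by (subst ex_factor[where f="?f x"]) (auto intro!: dep_mult dep_var)
    also have "ex m p {4} (\<lambda>S. ?f x (S 4)) = ?s x" by (rule ex_single)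
    finally show "mu m p x * ex m p (insert 1 {2,3,4}) (\<lambda>S. ?f x (S 1) * (?f x (S 2) * (?f x (S 3) * ?f x (S 4))))
        = mu m p x * ?s x ^ 4" by (simp add: eval_nat_numeral mult.assoc)
  qed
  finally show ?thesis .
qed


lemma L2: "(case lpar 2 of (l1, l2, l3, l4) \<Rightarrow>
           norm2sq m p ((l3 - l2) + (l1 - l3) + (l4 - l3))
             (contr m p (gbar m p l1) l1 (gbar m p l4) l2 l3))
    = (\<Sum>y\<in>cube m. mu m p y * (\<Sum>z\<in>cube m. mu m p z *
         (\<Sum>w\<in>cube m. mu m p w * ((gfun w y - phat m p) * (gfun w z - phat m p))) ^ 2))"
proof -
  have c: "contr m p (gbar m p 2) 2 (gbar m p 2) 1 1 [y, z] =
      (\<Sum>w\<in>cube m. mu m p w * ((gfun w y - phat m p) * (gfun w z - phat m p)))" for y z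
    by (simp add: contr_def sum_points1 sum_points1[simplified] mu_prod_def Let_def gbar_def mult.assoc)
  have "(case lpar 2 of (l1, l2, l3, l4) \<Rightarrow>
           norm2sq m p ((l3 - l2) + (l1 - l3) + (l4 - l3))
             (contr m p (gbar m p l1) l1 (gbar m p l4) l2 l3))
       = norm2sq m p 2 (contr m p (gbar m p 2) 2 (gbar m p 2) 1 1)" by (simp add: lpar_def numeral_2_eq_2)
  also have "\<dots> = (\<Sum>y\<in>cube m. \<Sum>z\<in>cube m. mu m p y * mu m p z * (contr m p (gbar m p 2) 2 (gbar m p 2) 1 1 [y, z])^2)"
    unfolding norm2sq_def sum_points2 mu_prod_def by simp
  also have "\<dots> = (\<Sum>y\<in>cube m. mu m p y * (\<Sum>z\<in>cube m. mu m p z *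
         (\<Sum>w\<in>cube m. mu m p w * ((gfun w y - phat m p) * (gfun w z - phat m p))) ^ 2))"
    unfolding c by (simp add: sum_distrib_left mult.assoc)
  finally show ?thesis .
qed

lemma R2: "ex m p (GI_verts 2 Ilab) (\<lambda>S. \<Prod>ab\<in>Ilab. eind S (Gedge 2 ab) - phat m p)
   = (\<Sum>y\<in>cube m. mu m p y * (\<Sum>z\<in>cube m. mu m p z *
         (\<Sum>w\<in>cube m. mu m p w * ((gfun w y - phat m p) * (gfun w z - phat m p))) ^ 2))"
proof -
  let ?H = "\<lambda>y z w. (gfun w y - phat m p) * (gfun w z - phat m p)"
  let ?s = "\<lambda>y z. \<Sum>w\<in>cube m. mu m p w * ?H y z w"
  have P: "(\<Prod>ab\<in>Ilab. eind S (Gedge 2 ab) - phat m p) = ?H (S 2) (S 3) (S 0) * ?H (S 2) (S 3) (S 1)" for S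
    by (simp add: Ilab_def Gedge_vals Gedge_vals[simplified] eind_pair ac_simps)
  have "ex m p (GI_verts 2 Ilab) (\<lambda>S. \<Prod>ab\<in>Ilab. eind S (Gedge 2 ab) - phat m p)
      = ex m p (insert 2 (insert 3 {0,1})) (\<lambda>S. ?H (S 2) (S 3) (S 0) * ?H (S 2) (S 3) (S 1))"
    unfolding GV2 P by (simp add: insert_commute)
  also have "\<dots> = (\<Sum>y\<in>cube m. mu m p y * (\<Sum>z\<in>cube m. mu m p z *
       ex m p (insert 0 {1}) (\<lambda>S. ?H y z (S 0) * ?H y z (S 1))))"
    by (simp add: ex_insert)
  also have "\<dots> = (\<Sum>y\<in>cube m. mu m p y * (\<Sum>z\<in>cube m. mu m p z * ?s y z ^ 2))"
  proof -
    have "ex m p (insert 0 {1}) (\<lambda>S. ?H y z (S 0) * ?H y z (S 1)) = ?s y z ^ 2" for y z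
    proof -
      have "ex m p (insert 0 {1}) (\<lambda>S. ?H y z (S 0) * ?H y z (S 1)) = ?s y z * ex m p {1} (\<lambda>S. ?H y z (S 1))"
        by (subst ex_factor[where f="?H y z"]) (auto intro!: dep_var)
      also have "ex m p {1} (\<lambda>S. ?H y z (S 1)) = ?s y z" by (rule ex_single)
      finally show ?thesis by (simp add: power2_eq_square)
    qed
    then show ?thesis by simp
  qed
  finally show ?thesis .
qed

lemma L3: "(case lpar 3 of (l1, l2, l3, l4) \<Rightarrow>
           norm2sq m p ((l3 - l2) + (l1 - l3) + (l4 - l3))
             (contr m p (gbar m p l1) l1 (gbar m p l4) l2 l3))
    = (\<Sum>y\<in>cube m. mu m p y * (\<Sum>w\<in>cube m. mu m p w * (\<Sum>z\<in>cube m. mu m p z *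
         ((gfun w y - phat m p) * (gfun w z - phat m p)))) ^ 2)"
proof -
  have c: "contr m p (gbar m p 2) 2 (gbar m p 1) 1 1 [y] =
      (\<Sum>w\<in>cube m. mu m p w * (\<Sum>z\<in>cube m. mu m p z * ((gfun w y - phat m p) * (gfun w z - phat m p))))" for y
  proof -
    have "contr m p (gbar m p 2) 2 (gbar m p 1) 1 1 [y] =
      (\<Sum>w\<in>cube m. mu m p w * (gbar m p 2 [w, y] * gbar m p 1 [w]))"
      by (simp add: contr_def sum_points1 sum_points1[simplified] mu_prod_def Let_def mult.assoc)
    also have "\<dots> = (\<Sum>w\<in>cube m. mu m p w * (\<Sum>z\<in>cube m. mu m p z * ((gfun w y - phat m p) * (gfun w z - phat m p))))"
      unfolding gbar1_sum by (simp add: gbar_def sum_distrib_left ac_simps)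
    finally show ?thesis .
  qed
  have "(case lpar 3 of (l1, l2, l3, l4) \<Rightarrow>
           norm2sq m p ((l3 - l2) + (l1 - l3) + (l4 - l3))
             (contr m p (gbar m p l1) l1 (gbar m p l4) l2 l3))
       = norm2sq m p 1 (contr m p (gbar m p 2) 2 (gbar m p 1) 1 1)" by (simp add: lpar_def)
  also have "\<dots> = (\<Sum>y\<in>cube m. mu m p y * (contr m p (gbar m p 2) 2 (gbar m p 1) 1 1 [y])^2)"
    unfolding norm2sq_def sum_points1 mu_prod_def by simp
  also have "\<dots> = (\<Sum>y\<in>cube m. mu m p y * (\<Sum>w\<in>cube m. mu m p w * (\<Sum>z\<in>cube m. mu m p z *
         ((gfun w y - phat m p) * (gfun w z - phat m p)))) ^ 2)"
    unfolding c by simp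
  finally show ?thesis .
qed

lemma R3: "ex m p (GI_verts 3 Ilab) (\<lambda>S. \<Prod>ab\<in>Ilab. eind S (Gedge 3 ab) - phat m p)
   = (\<Sum>y\<in>cube m. mu m p y * (\<Sum>w\<in>cube m. mu m p w * (\<Sum>z\<in>cube m. mu m p z *
         ((gfun w y - phat m p) * (gfun w z - phat m p)))) ^ 2)"
proof -
  let ?K = "\<lambda>y w z. (gfun w y - phat m p) * (gfun w z - phat m p)"
  let ?s = "\<lambda>y. \<Sum>w\<in>cube m. mu m p w * (\<Sum>z\<in>cube m. mu m p z * ?K y w z)"
  have P: "(\<Prod>ab\<in>Ilab. eind S (Gedge 3 ab) - phat m p) = ?K (S 2) (S 1) (S 0) * ?K (S 2) (S 3) (S 4)" for S
    by (simp add: Ilab_def Gedge_vals Gedge_vals[simplified] eind_pair ac_simps)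
  have "ex m p (GI_verts 3 Ilab) (\<lambda>S. \<Prod>ab\<in>Ilab. eind S (Gedge 3 ab) - phat m p)
      = ex m p (insert 2 ({1,0} \<union> {3,4})) (\<lambda>S. ?K (S 2) (S 1) (S 0) * ?K (S 2) (S 3) (S 4))"
    unfolding GV3 P by (simp add: insert_commute)
  also have "\<dots> = (\<Sum>y\<in>cube m. mu m p y *
       ex m p ({1,0} \<union> {3,4}) (\<lambda>S. ?K y (S 1) (S 0) * ?K y (S 3) (S 4)))"
    by (subst ex_insert) auto
  also have "\<dots> = (\<Sum>y\<in>cube m. mu m p y * ?s y ^ 2)"
  proof (rule sum.cong[OF refl])
    fix y
    have "ex m p ({1,0} \<union> {3,4}) (\<lambda>S. ?K y (S 1) (S 0) * ?K y (S 3) (S 4))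
        = ex m p {1,0} (\<lambda>S. ?K y (S 1) (S 0)) * ex m p {3,4} (\<lambda>S. ?K y (S 3) (S 4))"
      by (rule ex_mult) (auto intro!: dep_var2)
    also have "\<dots> = ?s y ^ 2"
    proof -
      have e1: "ex m p {1,0} (\<lambda>S. ?K y (S 1) (S 0)) = ?s y" using ex_two[of 1 0 m p "?K y"] by simp
      have e2: "ex m p {3,4} (\<lambda>S. ?K y (S 3) (S 4)) = ?s y" using ex_two[of 3 4 m p "?K y"] by simp
      show ?thesis unfolding e1 e2 by (simp add: power2_eq_square)
    qed
    finally show "mu m p y * ex m p ({1,0} \<union> {3,4}) (\<lambda>S. ?K y (S 1) (S 0) * ?K y (S 3) (S 4)) = mu m p y * ?s y ^ 2"
      by simp
  qed
  finally show ?thesis .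
qed


theorem lemma6p2:
  fixes n m i :: nat and p :: real
    and H :: "(nat \<times> nat) set \<Rightarrow> nat set \<times> nat set set"
  assumes "n \<ge> 8" and "0 < p" and "p < 1" and "i \<in> {1, 2, 3}"
    and "\<forall>I. I \<subseteq> Ilab \<longrightarrow> is_H n i I (H I)"
  shows "(case lpar i of (l1, l2, l3, l4) \<Rightarrow>
           norm2sq m p ((l3 - l2) + (l1 - l3) + (l4 - l3))
             (contr m p (gbar m p l1) l1 (gbar m p l4) l2 l3))
         = (\<Sum>I\<in>Pow Ilab. (-1) ^ card I * piH n m p (snd (H I)))"
proof -
  have As: "ex m p (GI_verts i Ilab) (\<lambda>S. \<Prod>ab\<in>Ilab. eind S (Gedge i ab) - phat m p)
    = (\<Sum>I\<in>Pow Ilab. (-1) ^ card I * piH n m p (snd (H I)))"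
    by (rule assemble[OF assms(4) assms(5)])
  from assms(4) consider "i = 1" | "i = 2" | "i = 3" by blast
  then show ?thesis
  proof cases
    case 1 then show ?thesis using As L1 R1 by simp
  next
    case 2 then show ?thesis using As L2 R2 by simp
  next
    case 3 then show ?thesis using As L3 R3 by simp
  qed
qed

end
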